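(* For every $\Gamma \in \mathrm{WR}(\Lambda_h)$, $$\cos\theta(\Gamma) = \frac{p}{q} \le \frac12, \qquad \sin\theta(\Gamma) = \frac{r}{q}\sqrt3 \ge \frac{\sqrt3}{2},$$ for some relatively prime triple $(p,r,q) \in \mathbb{Z}^3_{\ge 0}$.
   Context: $\Lambda_h = \begin{bmatrix} 1 & -1/2 \\ 0 & \sqrt3/2\end{bmatrix}\mathbb{Z}^2$ is the hexagonal lattice. For a full-rank lattice $\Gamma\subset\mathbb{R}^2$, $|\Gamma| = \min\{\|y\|^2 : y\in\Gamma\setminus\{0\}\}$; $\Gamma$ is well-rounded (WR) if it has a basis of vectors $y$ with $\|y\|^2=|\Gamma|$ (a minimal basis); such a basis can be chosen with the angle between its vectors in $[\pi/3,\pi/2]$, and this angle, denoted $\theta(\Gamma)$, is an invariant of $\Gamma$. $\mathrm{WR}(\Lambda_h)$ is the set of full-rank WR sublattices of $\Lambda_h$. *)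

theory Defs
  imports "HOL-Analysis.Analysis"
begin

definition hex_lattice :: "(real \<times> real) set" where
  "hex_lattice = {(of_int m - of_int n / 2, of_int n * sqrt 3 / 2) | m n :: int. True}"

definition lattice_gen :: "real \<times> real \<Rightarrow> real \<times> real \<Rightarrow> (real \<times> real) set" where
  "lattice_gen u v = {of_int a *\<^sub>R u + of_int b *\<^sub>R v | a b :: int. True}"

definition lin_indep2 :: "real \<times> real \<Rightarrow> real \<times> real \<Rightarrow> bool" where
  "lin_indep2 u v \<longleftrightarrow> fst u * snd v - snd u * fst v \<noteq> 0"

definition lattice_basis :: "(real \<times> real) set \<Rightarrow> real \<times> real \<Rightarrow> real \<times> real \<Rightarrow> bool" where
  "lattice_basis L u v \<longleftrightarrow> lin_indep2 u v \<and> L = lattice_gen u v"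

definition full_rank_lattice :: "(real \<times> real) set \<Rightarrow> bool" where
  "full_rank_lattice L \<longleftrightarrow> (\<exists>u v. lattice_basis L u v)"

definition lattice_min :: "(real \<times> real) set \<Rightarrow> real" where
  "lattice_min L = Inf {(norm y)\<^sup>2 | y. y \<in> L - {0}}"

definition minimal_basis :: "(real \<times> real) set \<Rightarrow> real \<times> real \<Rightarrow> real \<times> real \<Rightarrow> bool" where
  "minimal_basis L u v \<longleftrightarrow> lattice_basis L u v \<and>
     (norm u)\<^sup>2 = lattice_min L \<and> (norm v)\<^sup>2 = lattice_min L"

definition well_rounded :: "(real \<times> real) set \<Rightarrow> bool" where
  "well_rounded L \<longleftrightarrow> full_rank_lattice L \<and> (\<exists>u v. minimal_basis L u v)"

definition vangle :: "real \<times> real \<Rightarrow> real \<times> real \<Rightarrow> real" where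
  "vangle u v = arccos (inner u v / (norm u * norm v))"

definition wr_theta :: "(real \<times> real) set \<Rightarrow> real" where
  "wr_theta L = (THE t. pi / 3 \<le> t \<and> t \<le> pi / 2 \<and>
      (\<exists>u v. minimal_basis L u v \<and> vangle u v = t))"

definition WR_hex :: "(real \<times> real) set set" where
  "WR_hex = {L. L \<subseteq> hex_lattice \<and> full_rank_lattice L \<and> well_rounded L}"

end

theory Submission
  imports Defs
begin

definition dt :: "real \<times> real \<Rightarrow> real \<times> real \<Rightarrow> real" where
  "dt u v = fst u * snd v - snd u * fst v"

lemma inner_pair2: "inner (u::real\<times>real) v = fst u * fst v + snd u * snd v"
  by (cases u; cases v) (simp add: inner_Pair)

lemma lagrange: "inner u u * inner v v - (inner u v)\<^sup>2 = (dt u v)\<^sup>2"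
  by (simp add: inner_pair2 dt_def power2_eq_square algebra_simps)

lemma gen_mem: "of_int a *\<^sub>R u + of_int b *\<^sub>R v \<in> lattice_gen u v"
  unfolding lattice_gen_def by blast

lemma basis_mem:
  assumes "lattice_basis L u v"
  shows "u \<in> L" "v \<in> L" "u - v \<in> L" "u + v \<in> L" "u \<noteq> 0" "v \<noteq> 0" "u - v \<noteq> 0" "u + v \<noteq> 0"
proof -
  have L: "L = lattice_gen u v" and li: "dt u v \<noteq> 0"
    using assms by (auto simp: lattice_basis_def lin_indep2_def dt_def)
  show "u \<in> L" using gen_mem[of 1 u 0 v] L by simp
  show "v \<in> L" using gen_mem[of 0 u 1 v] L by simp
  show "u - v \<in> L" using gen_mem[of 1 u "-1" v] L by simp
  show "u + v \<in> L" using gen_mem[of 1 u 1 v] L by simp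
  show "u \<noteq> 0" using li by (auto simp: dt_def)
  show "v \<noteq> 0" using li by (auto simp: dt_def)
  show "u - v \<noteq> 0" using li by (cases u; cases v) (auto simp: dt_def zero_prod_def)
  show "u + v \<noteq> 0" using li by (cases u; cases v) (auto simp: dt_def zero_prod_def add_eq_0_iff)
qed

lemma min_le:
  assumes "y \<in> L" "y \<noteq> 0"
  shows "lattice_min L \<le> (norm y)\<^sup>2"
  unfolding lattice_min_def
proof (rule cInf_lower)
  show "(norm y)\<^sup>2 \<in> {(norm y)\<^sup>2 |y. y \<in> L - {0}}" using assms by blast
  show "bdd_below {(norm y)\<^sup>2 |y. y \<in> L - {0}}"
    unfolding bdd_below_def by (rule exI[of _ 0]) auto
qed

lemma mb_props:
  assumes "minimal_basis L u v"
  shows "lattice_min L > 0" "inner u u = lattice_min L" "inner v v = lattice_min L"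
        "\<bar>inner u v\<bar> \<le> lattice_min L / 2" "norm u * norm v = lattice_min L"
proof -
  define m where "m = lattice_min L"
  have b: "lattice_basis L u v" and nu: "(norm u)\<^sup>2 = m" and nv: "(norm v)\<^sup>2 = m"
    using assms by (auto simp: minimal_basis_def m_def)
  note bm = basis_mem[OF b]
  show iu: "inner u u = lattice_min L" using nu by (simp add: power2_norm_eq_inner m_def)
  show iv: "inner v v = lattice_min L" using nv by (simp add: power2_norm_eq_inner m_def)
  show "lattice_min L > 0" using iu bm(5) by (metis inner_gt_zero_iff)
  have "m \<le> (norm (u - v))\<^sup>2" using min_le[OF bm(3) bm(7)] m_def by simp
  also have "\<dots> = 2*m - 2 * inner u v"
    using iu iv by (simp add: power2_norm_eq_inner inner_diff_left inner_diff_right inner_commute m_def)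
  finally have 1: "inner u v \<le> m/2" by simp
  have "m \<le> (norm (u + v))\<^sup>2" using min_le[OF bm(4) bm(8)] m_def by simp
  also have "\<dots> = 2*m + 2 * inner u v"
    using iu iv by (simp add: power2_norm_eq_inner inner_add_left inner_add_right inner_commute m_def)
  finally have 2: "- inner u v \<le> m/2" by simp
  show "\<bar>inner u v\<bar> \<le> lattice_min L / 2" using 1 2 m_def by auto
  have "norm u = norm v" using nu nv by (metis norm_ge_zero power2_eq_iff_nonneg)
  then show "norm u * norm v = lattice_min L" using nu m_def by (simp add: power2_eq_square)
qed

lemma mb_cos:
  assumes "minimal_basis L u v"
  shows "cos (vangle u v) = inner u v / lattice_min L"
proof -
  note p = mb_props[OF assms]
  have a: "\<bar>inner u v\<bar> \<le> lattice_min L" using p(1) p(4) by linarith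
  have "\<bar>inner u v / lattice_min L\<bar> = \<bar>inner u v\<bar> / lattice_min L"
    using p(1) by (simp add: abs_divide)
  also have "\<dots> \<le> 1" using p(1) a by (simp add: divide_le_eq_1_pos)
  finally have "\<bar>inner u v / lattice_min L\<bar> \<le> 1" .
  then show ?thesis unfolding vangle_def p(5) by (rule cos_arccos_abs)
qed

lemma dt_comb: "dt (a *\<^sub>R u + b *\<^sub>R v) (c *\<^sub>R u + d *\<^sub>R v) = (a*d - b*c) * dt u v"
  by (simp add: dt_def algebra_simps)

lemma dt_rel:
  assumes "lattice_basis L u v" "u' \<in> L" "v' \<in> L"
  shows "\<exists>k::int. dt u' v' = of_int k * dt u v"
proof -
  have L: "L = lattice_gen u v" using assms by (simp add: lattice_basis_def)
  obtain a b where u': "u' = of_int a *\<^sub>R u + of_int b *\<^sub>R v" using assms(2) L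
    by (auto simp: lattice_gen_def)
  obtain c d where v': "v' = of_int c *\<^sub>R u + of_int d *\<^sub>R v" using assms(3) L
    by (auto simp: lattice_gen_def)
  show ?thesis using dt_comb u' v' by (intro exI[of _ "a*d-b*c"]) simp
qed

lemma dt_inv:
  assumes "lattice_basis L u v" "lattice_basis L u' v'"
  shows "(dt u v)\<^sup>2 = (dt u' v')\<^sup>2"
proof -
  note m1 = basis_mem[OF assms(1)] and m2 = basis_mem[OF assms(2)]
  obtain k where k: "dt u' v' = of_int k * dt u v" using dt_rel[OF assms(1) m2(1,2)] by blast
  obtain k' where k': "dt u v = of_int k' * dt u' v'" using dt_rel[OF assms(2) m1(1,2)] by blast
  have nz: "dt u v \<noteq> 0" using assms(1) by (simp add: lattice_basis_def lin_indep2_def dt_def)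
  have "dt u v = of_int k' * (of_int k * dt u v)" by (subst k[symmetric]) (rule k')
  then have "of_int (k' * k) * dt u v = 1 * dt u v" by (simp add: mult.assoc)
  then have "of_int (k' * k) = (1::real)" using nz by (metis mult_cancel_right)
  then have "k' * k = 1" by linarith
  then have "k = 1 \<or> k = -1" by (auto simp: zmult_eq_1_iff)
  then show ?thesis using k by auto
qed

definition hx :: "int \<Rightarrow> int \<Rightarrow> real \<times> real" where
  "hx a b = (of_int a - of_int b / 2, of_int b * sqrt 3 / 2)"

lemma s3: "sqrt 3 * sqrt 3 = (3::real)" by simp

lemma hx_inner: "2 * inner (hx a b) (hx c d) = of_int (2*a*c+2*b*d-a*d-b*c)"
proof -
  have "2 * inner (hx a b) (hx c d) = 2*(of_int a - of_int b / 2)*(of_int c - of_int d / 2)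
     + of_int b * of_int d * (sqrt 3 * sqrt 3) / 2"
    by (simp add: hx_def inner_pair2 field_simps)
  also have "\<dots> = of_int (2*a*c+2*b*d-a*d-b*c)" unfolding s3 by (simp add: field_simps)
  finally show ?thesis .
qed

lemma aux_dt: "(x - y/2) * (w * k/2) - (y * k/2) * (z - w/2) = k/2 * (x * w - y * (z::real))"
  by (simp add: field_simps)

lemma hx_dt: "dt (hx a b) (hx c d) = sqrt 3 / 2 * of_int (a*d - b*c)"
  unfolding hx_def dt_def fst_conv snd_conv aux_dt by simp

lemma hex_hx: "y \<in> hex_lattice \<Longrightarrow> \<exists>a b. y = hx a b"
  by (auto simp: hex_lattice_def hx_def)

lemma gen_neg: "lattice_gen u (-v) = lattice_gen u v"
proof (rule set_eqI, rule iffI)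
  fix x assume "x \<in> lattice_gen u (-v)"
  then obtain a b where x: "x = of_int a *\<^sub>R u + of_int b *\<^sub>R (-v)" unfolding lattice_gen_def by blast
  have "x = of_int a *\<^sub>R u + of_int (-b) *\<^sub>R v" unfolding x by simp
  then show "x \<in> lattice_gen u v" by (simp only: gen_mem)
next
  fix x assume "x \<in> lattice_gen u v"
  then obtain a b where x: "x = of_int a *\<^sub>R u + of_int b *\<^sub>R v" unfolding lattice_gen_def by blast
  have "x = of_int a *\<^sub>R u + of_int (-b) *\<^sub>R (-v)" unfolding x by simp
  then show "x \<in> lattice_gen u (-v)" by (simp only: gen_mem)
qed

lemma mb_neg: "minimal_basis L u v \<Longrightarrow> minimal_basis L u (-v)"
  by (simp add: minimal_basis_def lattice_basis_def lin_indep2_def gen_neg)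

lemma gcd3_div:
  fixes x y z :: int
  assumes "g = gcd x (gcd y z)" "g > 0"
  shows "gcd (x div g) (gcd (y div g) (z div g)) = 1"
proof -
  have d: "g dvd x" "g dvd y" "g dvd z" using assms(1) by (metis gcd_dvd1 gcd_dvd2 dvd_trans)+
  have "g = gcd (g * (x div g)) (gcd (g * (y div g)) (g * (z div g)))"
    using assms(1) d by simp
  also have "\<dots> = g * gcd (x div g) (gcd (y div g) (z div g))"
    using assms(2) by (simp add: gcd_mult_distrib_int[symmetric])
  finally show ?thesis using assms(2) by simp
qed

theorem lemma3p1:
  assumes "\<Gamma> \<in> WR_hex"
  shows "\<exists>p r q :: int. p \<ge> 0 \<and> r \<ge> 0 \<and> q \<ge> 0 \<and> gcd p (gcd r q) = 1 \<and>
           cos (wr_theta \<Gamma>) = of_int p / of_int q \<and> of_int p / of_int q \<le> (1/2::real) \<and>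
           sin (wr_theta \<Gamma>) = of_int r / of_int q * sqrt 3 \<and>
           of_int r / of_int q * sqrt 3 \<ge> sqrt 3 / (2::real)"
proof -
  have sub: "\<Gamma> \<subseteq> hex_lattice" and wr: "well_rounded \<Gamma>" using assms by (auto simp: WR_hex_def)
  obtain u0 v0 where mb0: "minimal_basis \<Gamma> u0 v0" using wr by (auto simp: well_rounded_def)
  obtain u v where mb: "minimal_basis \<Gamma> u v" and ip: "inner u v \<ge> 0"
  proof (cases "inner u0 v0 \<ge> 0")
    case True then show ?thesis using that mb0 by blast
  next
    case False then show ?thesis using that[OF mb_neg[OF mb0]] by simp
  qed
  define m where "m = lattice_min \<Gamma>"
  define i where "i = inner u v"
  note P = mb_props[OF mb, folded m_def]
  have bas: "lattice_basis \<Gamma> u v" using mb by (simp add: minimal_basis_def)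
  define t0 where "t0 = vangle u v"
  have ct0: "cos t0 = i / m" unfolding t0_def i_def m_def by (rule mb_cos[OF mb])
  have t0a: "t0 = arccos (i/m)" unfolding t0_def vangle_def P(5) i_def ..
  have im0: "0 \<le> i/m" using ip P(1) i_def by simp
  have im1: "i/m \<le> 1/2" using P(1,4) ip i_def by (simp add: field_simps)
  have t0lo: "pi/3 \<le> t0" unfolding t0a arccos_one_half[symmetric]
    by (rule arccos_le_arccos) (use im0 im1 in linarith)+
  have t0hi: "t0 \<le> pi/2" unfolding t0a arccos_0[symmetric]
    by (rule arccos_le_arccos) (use im0 im1 in linarith)+
  have lag: "m * m - i\<^sup>2 = (dt u v)\<^sup>2" using lagrange[of u v] P(2,3) i_def by simp
  have "wr_theta \<Gamma> = t0" unfolding wr_theta_def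
  proof (rule the_equality)
    show "pi / 3 \<le> t0 \<and> t0 \<le> pi / 2 \<and> (\<exists>u v. minimal_basis \<Gamma> u v \<and> vangle u v = t0)"
      using t0lo t0hi mb t0_def by blast
  next
    fix t assume "pi / 3 \<le> t \<and> t \<le> pi / 2 \<and> (\<exists>u v. minimal_basis \<Gamma> u v \<and> vangle u v = t)"
    then obtain u' v' where tl: "pi/3 \<le> t" and th: "t \<le> pi/2" and mb': "minimal_basis \<Gamma> u' v'"
      and tv: "vangle u' v' = t" by blast
    note P' = mb_props[OF mb', folded m_def]
    have ct: "cos t = inner u' v' / m" using mb_cos[OF mb'] tv m_def by simp
    have lag': "m * m - (inner u' v')\<^sup>2 = (dt u' v')\<^sup>2" using lagrange[of u' v'] P'(2,3) by simp
    have "(dt u' v')\<^sup>2 = (dt u v)\<^sup>2"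
      using dt_inv[OF bas] mb' unfolding minimal_basis_def by metis
    then have "(inner u' v')\<^sup>2 = i\<^sup>2" using lag lag' by simp
    then have "(cos t)\<^sup>2 = (cos t0)\<^sup>2" using ct ct0 by (simp add: power_divide)
    moreover have "cos t \<ge> 0" using tl th by (intro cos_ge_zero) auto
    moreover have "cos t0 \<ge> 0" using t0lo t0hi by (intro cos_ge_zero) auto
    ultimately have "cos t = cos t0" using power2_eq_iff_nonneg[of "cos t" "cos t0"] by simp
    then have cc: "cos t = cos t0" .
    show "t = t0" by (rule cos_inj_pi) (use cc tl th t0lo t0hi pi_gt_zero in linarith)+
  qed
  have s0: "sin t0 \<ge> 0" using t0lo t0hi pi_gt_zero by (intro sin_ge_zero) linarith+
  have "(sin t0)\<^sup>2 = 1 - (i/m)\<^sup>2" using sin_squared_eq[of t0] ct0 by simp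
  also have "\<dots> = (m*m - i\<^sup>2) / m\<^sup>2" using P(1) by (simp add: field_simps power2_eq_square)
  also have "\<dots> = (dt u v)\<^sup>2 / m\<^sup>2" using lag by simp
  also have "\<dots> = (\<bar>dt u v\<bar> / m)\<^sup>2" by (simp add: power_divide)
  finally have sq0: "(sin t0)\<^sup>2 = (\<bar>dt u v\<bar> / m)\<^sup>2" .
  have nn: "0 \<le> \<bar>dt u v\<bar> / m" using P(1) by simp
  have st0: "sin t0 = \<bar>dt u v\<bar> / m" using power2_eq_iff_nonneg[OF s0 nn] sq0 by simp
  have sge: "sin t0 \<ge> sqrt 3 / 2"
  proof (rule power2_le_imp_le[OF _ s0])
    have "(sin t0)\<^sup>2 = 1 - (i/m)\<^sup>2" using sin_squared_eq[of t0] ct0 by simp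
    moreover have "(i/m)\<^sup>2 \<le> (1/2)\<^sup>2" using im0 im1 by (intro power_mono) auto
    ultimately show "(sqrt 3 / 2)\<^sup>2 \<le> (sin t0)\<^sup>2" by (simp add: power_divide)
  qed
  obtain a b where ua: "u = hx a b" using hex_hx sub basis_mem(1)[OF bas] by blast
  obtain c d where vc: "v = hx c d" using hex_hx sub basis_mem(2)[OF bas] by blast
  define N where "N = a*a+b*b-a*b"
  define I where "I = 2*a*c+2*b*d-a*d-b*c"
  define D where "D = \<bar>a*d-b*c\<bar>"
  have mN: "2 * m = of_int (2*N)" using hx_inner[of a b a b] P(2) ua unfolding N_def by simp
  have iI: "2 * i = of_int I" using hx_inner[of a b c d] ua vc unfolding I_def i_def by simp
  have dD: "\<bar>dt u v\<bar> = sqrt 3 / 2 * of_int D" unfolding ua vc hx_dt D_def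
    by (simp only: abs_mult of_int_abs) simp
  have Npos: "2*N > 0" using mN P(1) by linarith
  have I0: "I \<ge> 0" using iI ip i_def by linarith
  have "cos t0 = (2*i) / (2*m)" using ct0 by simp
  then have cosI: "cos t0 = of_int I / of_int (2*N)" by (simp only: iI mN)
  have sinD: "sin t0 = of_int D / of_int (2*N) * sqrt 3" using st0 mN dD P(1)
    by (simp add: field_simps)
  define g where "g = gcd I (gcd D (2*N))"
  have gpos: "g > 0" using Npos unfolding g_def by (simp add: gcd_pos_int)
  have dv: "g dvd I" "g dvd D" "g dvd 2*N" unfolding g_def by (metis gcd_dvd1 gcd_dvd2 dvd_trans)+
  define p where "p = I div g"
  define r where "r = D div g"
  define q where "q = 2*N div g"
  have fr: "\<And>x. g dvd x \<Longrightarrow> of_int x / of_int (2*N) = of_int (x div g) / (of_int q :: real)"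
    unfolding q_def using gpos dv(3) by (simp add: real_of_int_div)
  have cq: "cos t0 = of_int p / of_int q" using cosI fr[OF dv(1)] p_def by simp
  have sq: "sin t0 = of_int r / of_int q * sqrt 3" unfolding sinD fr[OF dv(2)] r_def ..
  show ?thesis
  proof (intro exI conjI)
    show "p \<ge> 0" unfolding p_def using I0 gpos by (simp add: pos_imp_zdiv_nonneg_iff)
    show "r \<ge> 0" unfolding r_def D_def using gpos by (simp add: pos_imp_zdiv_nonneg_iff)
    show "q \<ge> 0" unfolding q_def using Npos gpos by (simp add: pos_imp_zdiv_nonneg_iff)
    show "gcd p (gcd r q) = 1" unfolding p_def r_def q_def by (rule gcd3_div[OF g_def gpos])
    show "cos (wr_theta \<Gamma>) = of_int p / of_int q" using cq \<open>wr_theta \<Gamma> = t0\<close> by simp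
    show "of_int p / of_int q \<le> (1/2::real)" using cq ct0 im1 by simp
    show "sin (wr_theta \<Gamma>) = of_int r / of_int q * sqrt 3" using sq \<open>wr_theta \<Gamma> = t0\<close> by simp
    show "of_int r / of_int q * sqrt 3 \<ge> sqrt 3 / (2::real)" using sq sge by simp
  qed
qed

end
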